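(* Let $X$ be a random variable with values in $[0,C]$, $r:[0,C]\to[E,D]$ measurable with $E\le0\le D$, $\lambda>0$, and let $c^*$ be the unique root on $\mathbb{R}_+$ of $\Phi(c)=\lambda\,\mathbb{E}[(r(X)-cX)_+]-c$. Let $\mathcal{E}\subset\{x\in[0,C]: r(x)\le c^*x\}$ be any (measurable) set, and define $r_{\mathcal E}(x)=r(x)\mathbf 1(x\notin\mathcal E)$. Then the profitability threshold associated with $r_{\mathcal E}$, i.e. the unique root on $\mathbb{R}_+$ of $c\mapsto\lambda\mathbb{E}[(r_{\mathcal E}(X)-cX)_+]-c$, equals $c^*$; equivalently, $$c^*=\lambda\,\mathbb{E}\big[(r_{\mathcal E}(X)-c^*X)_+\big].$$
   Context: $(z)_+=\max\{z,0\}$. *)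

theory Defs
  imports "HOL-Probability.Probability"
begin

definition Phi :: "'a measure \<Rightarrow> ('a \<Rightarrow> real) \<Rightarrow> (real \<Rightarrow> real) \<Rightarrow> real \<Rightarrow> real \<Rightarrow> real" where
  "Phi M X r lam c = lam * (\<integral>\<omega>. max (r (X \<omega>) - c * X \<omega>) 0 \<partial>M) - c"

definition unique_root_nonneg :: "(real \<Rightarrow> real) \<Rightarrow> real \<Rightarrow> bool" where
  "unique_root_nonneg f c \<longleftrightarrow> c \<ge> 0 \<and> f c = 0 \<and> (\<forall>c'\<ge>0. f c' = 0 \<longrightarrow> c' = c)"

end

theory Submission
  imports Defs
begin

theorem lemma4p2:
  fixes M :: "'a measure" and X :: "'a \<Rightarrow> real" and r :: "real \<Rightarrow> real"
    and C E D lam cstar :: real and Ee :: "real set"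
  assumes "prob_space M"
    and "X \<in> borel_measurable M"
    and "\<forall>\<omega>\<in>space M. X \<omega> \<in> {0..C}"
    and "r \<in> borel_measurable (restrict_space borel {0..C})"
    and "\<forall>x\<in>{0..C}. r x \<in> {E..D}"
    and "E \<le> 0" and "0 \<le> D"
    and "lam > 0"
    and "unique_root_nonneg (Phi M X r lam) cstar"
    and "Ee \<in> sets borel"
    and "Ee \<subseteq> {x \<in> {0..C}. r x \<le> cstar * x}"
  shows "unique_root_nonneg (Phi M X (\<lambda>x. if x \<in> Ee then 0 else r x) lam) cstar
         \<and> cstar = lam * (\<integral>\<omega>. max ((if X \<omega> \<in> Ee then 0 else r (X \<omega>)) - cstar * X \<omega>) 0 \<partial>M)"
proof -
  interpret P: prob_space M by fact
  have Xr: "X \<in> measurable M (restrict_space borel {0..C})"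
    using assms(2,3) by (auto intro: measurable_restrict_space2)
  have rX: "(\<lambda>\<omega>. r (X \<omega>)) \<in> borel_measurable M"
    using measurable_comp[OF Xr assms(4)] by (simp add: comp_def)
  have XE: "{\<omega> \<in> space M. X \<omega> \<in> Ee} \<in> sets M"
    using measurable_sets[OF assms(2) assms(10)] by (simp add: vimage_def Int_def conj_commute)
  define g where "g \<omega> = (if X \<omega> \<in> Ee then 0 else r (X \<omega>))" for \<omega>
  have gm: "g \<in> borel_measurable M"
    unfolding g_def by (rule measurable_If[OF measurable_const rX XE]) simp
  define I where "I c = (\<integral>\<omega>. max (g \<omega> - c * X \<omega>) 0 \<partial>M)" for c
  have gb: "g \<omega> \<le> D" if "\<omega> \<in> space M" for \<omega>
  proof (cases "X \<omega> \<in> Ee")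
    case False
    have "X \<omega> \<in> {0..C}" using assms(3) that by blast
    hence "r (X \<omega>) \<le> D" using assms(5) by auto
    thus ?thesis using False unfolding g_def by simp
  qed (simp add: g_def assms(7))
  have int: "integrable M (\<lambda>\<omega>. max (g \<omega> - c * X \<omega>) 0)" if "c \<ge> 0" for c
  proof (rule P.integrable_const_bound[where B=D])
    show "AE x in M. norm (max (g x - c * X x) 0) \<le> D"
    proof (rule AE_I2)
      fix x assume x: "x \<in> space M"
      have "X x \<ge> 0" using assms(3) x by auto
      hence "c * X x \<ge> 0" using that by simp
      thus "norm (max (g x - c * X x) 0) \<le> D" using gb[OF x] assms(7) by auto
    qed
    show "(\<lambda>\<omega>. max (g \<omega> - c * X \<omega>) 0) \<in> borel_measurable M"
      using gm assms(2) by (intro borel_measurable_max borel_measurable_diff borel_measurable_times measurable_const) auto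
  qed
  have mono: "I b \<le> I a" if "0 \<le> a" "a \<le> b" for a b
    unfolding I_def
  proof (rule integral_mono[OF int int])
    fix x assume x: "x \<in> space M"
    have "X x \<ge> 0" using assms(3) x by auto
    hence "b * X x \<ge> a * X x" using that by (simp add: mult_right_mono)
    thus "max (g x - b * X x) 0 \<le> max (g x - a * X x) 0" by simp
  qed (use that in auto)
  have PhiE: "Phi M X (\<lambda>x. if x \<in> Ee then 0 else r x) lam c = lam * I c - c" for c
    unfolding Phi_def I_def g_def by simp
  have cs: "cstar \<ge> 0" "Phi M X r lam cstar = 0"
    using assms(9) unfolding unique_root_nonneg_def by auto
  have eqI: "I cstar = (\<integral>\<omega>. max (r (X \<omega>) - cstar * X \<omega>) 0 \<partial>M)"
    unfolding I_def
  proof (rule Bochner_Integration.integral_cong[OF refl])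
    fix x assume x: "x \<in> space M"
    have "X x \<ge> 0" using assms(3) x by auto
    hence "cstar * X x \<ge> 0" using cs by simp
    thus "max (g x - cstar * X x) 0 = max (r (X x) - cstar * X x) 0"
      using assms(11) unfolding g_def by auto
  qed
  have root: "lam * I cstar - cstar = 0"
    using cs(2) eqI unfolding Phi_def by simp
  have uniq: "c' = cstar" if "c' \<ge> 0" "lam * I c' - c' = 0" for c'
  proof (rule ccontr)
    assume "c' \<noteq> cstar"
    hence "c' < cstar \<or> cstar < c'" by auto
    thus False
    proof
      assume "c' < cstar"
      hence "I cstar \<le> I c'" using mono that by auto
      hence "lam * I cstar \<le> lam * I c'" using assms(8) by simp
      thus False using root that \<open>c' < cstar\<close> by linarith
    next
      assume "cstar < c'"
      hence "I c' \<le> I cstar" using mono cs by auto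
      hence "lam * I c' \<le> lam * I cstar" using assms(8) by simp
      thus False using root that \<open>cstar < c'\<close> by linarith
    qed
  qed
  have A: "unique_root_nonneg (Phi M X (\<lambda>x. if x \<in> Ee then 0 else r x) lam) cstar"
    unfolding unique_root_nonneg_def PhiE using cs(1) root uniq by blast
  have B: "cstar = lam * I cstar" using root by simp
  show ?thesis using A B unfolding I_def g_def by simp
qed

end
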